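(* Let $F=(F_1,\dots,F_m):[B(\mathcal H)^n]_1\to[B(\mathcal H)^m]_1$ be a free holomorphic function. Then (i) the map $\varphi(X_1,\dots,X_n):=[X_1,\dots,X_n]F'(0)^t$, i.e. $\varphi(X)=\left(\sum_ia^{(1)}_{g_i}X_i,\dots,\sum_ia^{(m)}_{g_i}X_i\right)$, maps $[B(\mathcal H)^n]_1$ into $[B(\mathcal H)^m]_1$; in particular $\|F'(0)\|\le1$. (ii) If $F(0)=0$, then $\|F(X)\|\le\|X\|$ for all $X\in[B(\mathcal H)^n]_1$. *)

theory Defs
  imports "HOL-Analysis.Analysis"
begin

text \<open>A complex Hilbert space is modelled as a real Hilbert space 'h together with a
  complex structure J (multiplication by i): J is real-linear, J (J x) = -x, and J is
  orthogonal.\<close>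

definition cstruct :: "('h::{real_inner,complete_space} \<Rightarrow> 'h) \<Rightarrow> bool" where
  "cstruct J \<longleftrightarrow> linear J \<and> (\<forall>x. J (J x) = - x) \<and> (\<forall>x y. inner (J x) (J y) = inner x y)"

definition cscale :: "('h::real_vector \<Rightarrow> 'h) \<Rightarrow> complex \<Rightarrow> 'h \<Rightarrow> 'h" where
  "cscale J c h = Re c *\<^sub>R h + Im c *\<^sub>R J h"

text \<open>B(H): bounded complex-linear operators on H.\<close>
definition bop :: "('h::{real_inner,complete_space} \<Rightarrow> 'h) \<Rightarrow> ('h \<Rightarrow> 'h) \<Rightarrow> bool" where
  "bop J T \<longleftrightarrow> bounded_linear T \<and> (\<forall>x. T (J x) = J (T x))"

text \<open>Norm of an n-tuple X = (X_0,...,X_{n-1}) of operators: the operator norm of the row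
  operator [X_1 ... X_n] : H^n \<rightarrow> H, which equals the norm of (X_1 X_1* + ... + X_n X_n*)^(1/2).\<close>
definition rownorm :: "nat \<Rightarrow> (nat \<Rightarrow> 'h::real_inner \<Rightarrow> 'h) \<Rightarrow> real" where
  "rownorm n X = Sup {norm (\<Sum>i<n. X i (h i)) | h. (\<Sum>i<n. (norm (h i))\<^sup>2) \<le> 1}"

definition ncball :: "('h::{real_inner,complete_space} \<Rightarrow> 'h) \<Rightarrow> nat \<Rightarrow> (nat \<Rightarrow> 'h \<Rightarrow> 'h) set" where
  "ncball J n = {X. (\<forall>i<n. bop J (X i)) \<and> rownorm n X < 1}"

definition words :: "nat \<Rightarrow> nat \<Rightarrow> nat list set" where
  "words n k = {\<alpha>. length \<alpha> = k \<and> set \<alpha> \<subseteq> {..<n}}"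

definition wordop :: "(nat \<Rightarrow> 'h \<Rightarrow> 'h) \<Rightarrow> nat list \<Rightarrow> 'h \<Rightarrow> 'h" where
  "wordop X \<alpha> = foldr (\<lambda>i T. X i \<circ> T) \<alpha> id"

text \<open>A formal power series \<Sum>_\<alpha> a_\<alpha> Z_\<alpha> in n noncommuting indeterminates is a free
  holomorphic function on the open unit ball iff its radius of convergence is \<ge> 1, i.e.
  limsup_k (\<Sum>_{|\<alpha>|=k} |a_\<alpha>|^2)^(1/2k) \<le> 1.\<close>
definition free_holo :: "nat \<Rightarrow> (nat list \<Rightarrow> complex) \<Rightarrow> bool" where
  "free_holo n a \<longleftrightarrow>
     limsup (\<lambda>k. ereal (root (2 * k) (\<Sum>\<alpha>\<in>words n k. (cmod (a \<alpha>))\<^sup>2))) \<le> 1"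

text \<open>Homogeneous part of degree k evaluated at X, and the value F(X) = \<Sum>_k \<Sum>_{|\<alpha>|=k} a_\<alpha> X_\<alpha>
  (series converging in operator norm on the ball; here evaluated pointwise).\<close>
definition homog :: "('h::real_vector \<Rightarrow> 'h) \<Rightarrow> nat \<Rightarrow> (nat list \<Rightarrow> complex) \<Rightarrow> nat
                     \<Rightarrow> (nat \<Rightarrow> 'h \<Rightarrow> 'h) \<Rightarrow> 'h \<Rightarrow> 'h" where
  "homog J n a k X h = (\<Sum>\<alpha>\<in>words n k. cscale J (a \<alpha>) (wordop X \<alpha> h))"

definition freeval :: "('h::real_normed_vector \<Rightarrow> 'h) \<Rightarrow> nat \<Rightarrow> (nat list \<Rightarrow> complex)
                       \<Rightarrow> (nat \<Rightarrow> 'h \<Rightarrow> 'h) \<Rightarrow> 'h \<Rightarrow> 'h" where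
  "freeval J n a X h = (\<Sum>k. homog J n a k X h)"

text \<open>The linear part: \<phi>(X) = [X_1,...,X_n] F'(0)^t, with F'(0) = (a^{(j)}_{g_i})_{j,i}.\<close>
definition linpart :: "('h::real_vector \<Rightarrow> 'h) \<Rightarrow> nat \<Rightarrow> (nat \<Rightarrow> nat list \<Rightarrow> complex)
                       \<Rightarrow> (nat \<Rightarrow> 'h \<Rightarrow> 'h) \<Rightarrow> nat \<Rightarrow> 'h \<Rightarrow> 'h" where
  "linpart J n a X j h = (\<Sum>i<n. cscale J (a j [i]) (X i h))"

definition derivnorm :: "nat \<Rightarrow> nat \<Rightarrow> (nat \<Rightarrow> nat list \<Rightarrow> complex) \<Rightarrow> real" where
  "derivnorm m n a = Sup {sqrt (\<Sum>j<m. (cmod (\<Sum>i<n. a j [i] * z i))\<^sup>2) | z.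
                           (\<Sum>i<n. (cmod (z i))\<^sup>2) \<le> 1}"

end

theory Submission
  imports Defs
begin


lemma root_unity_sum:
  fixes N j :: nat assumes N: "N \<ge> 1"
  shows "(\<Sum>p<N. (exp(2 * of_real pi * \<i> / of_nat N) ^ j) ^ p) = (if N dvd j then of_nat N else 0)"
proof -
  define w where "w = exp(2 * of_real pi * \<i> / of_nat N)"
  have wj: "w ^ j = exp(2 * of_real pi * \<i> * of_nat j / of_nat N)" for j
    unfolding w_def exp_of_nat_mult[symmetric] by (simp add: field_simps)
  have wN: "(w ^ j) ^ N = 1"
  proof -
    have "(w ^ j) ^ N = (w ^ N) ^ j" by (simp add: power_mult[symmetric] mult.commute)
    also have "w ^ N = 1" using wj[of N] N complex_root_unity_eq_1[of N N] by simp
    finally show ?thesis by simp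
  qed
  have eq1: "w ^ j = 1 \<longleftrightarrow> N dvd j" using wj[of j] complex_root_unity_eq_1[OF N, of j] by simp
  show ?thesis
    unfolding w_def[symmetric] using eq1 wN by (simp add: sum_gp_strict)
qed

lemma coeff_bound:
  fixes f :: "complex fps"
  assumes rad: "fps_conv_radius f > 1" and bd: "\<forall>z. norm z = 1 \<longrightarrow> norm (eval_fps f z) \<le> B"
  shows "norm (fps_nth f k) \<le> B"
proof -
  define a where "a m = fps_nth f m" for m
  have sumn: "summable (\<lambda>m. norm (a m))"
    using norm_summable_fps[of 1 f] rad by (simp add: a_def one_ereal_def)
  define S where "S = (\<Sum>m. norm (a m))"
  define T where "T N = S - (\<Sum>m<N. norm (a m))" for N
  have T0: "T \<longlonglongrightarrow> 0"
  proof -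
    have "(\<lambda>N. \<Sum>m<N. norm (a m)) \<longlonglongrightarrow> S" using sumn summable_LIMSEQ S_def by blast
    hence "(\<lambda>N. S - (\<Sum>m<N. norm (a m))) \<longlonglongrightarrow> S - S" by (intro tendsto_intros)
    thus ?thesis by (simp add: T_def[abs_def])
  qed
  have main: "norm (a k) \<le> B + T N" if N: "N > k" for N
  proof -
    have N1: "N \<ge> 1" using N by simp
    define w where "w = exp(2 * of_real pi * \<i> / of_nat N)"
    have nw: "norm w = 1" unfolding w_def by simp
    have nwp: "norm (w ^ p) = 1" for p by (simp add: norm_power nw)
    define ind where "ind m = (if N dvd (m + N - k) then 1 else 0 :: complex)" for m
    have summ: "summable (\<lambda>m. a m * (w ^ p) ^ m)" for p
      using summable_fps[of "w^p" f] rad nwp by (simp add: a_def one_ereal_def)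
    define A where "A = (\<Sum>p<N. (w ^ (N - k)) ^ p * eval_fps f (w ^ p))"
    have A_eq: "A = (\<Sum>m. a m * (of_nat N * ind m))"
    proof -
      have "A = (\<Sum>p<N. \<Sum>m. (w ^ (N - k)) ^ p * (a m * (w ^ p) ^ m))"
        unfolding A_def eval_fps_def a_def[symmetric]
        by (intro sum.cong refl, subst suminf_mult[symmetric]) (use summ in auto)
      also have "\<dots> = (\<Sum>m. \<Sum>p<N. (w ^ (N - k)) ^ p * (a m * (w ^ p) ^ m))"
        by (subst suminf_sum) (use summ summable_mult in auto)
      also have "\<dots> = (\<Sum>m. a m * (\<Sum>p<N. (w ^ (m + N - k)) ^ p))"
      proof (intro suminf_cong)
        fix m
        have eqp: "(w ^ (N - k)) ^ p * (a m * (w ^ p) ^ m) = a m * (w ^ (m + N - k)) ^ p" for p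
        proof -
          have "(w ^ (N - k)) ^ p * (w ^ p) ^ m = (w ^ (m + N - k)) ^ p"
            using N by (simp add: power_mult[symmetric] power_add[symmetric] mult.commute
                 algebra_simps)
          thus ?thesis by (simp add: algebra_simps)
        qed
        thus "(\<Sum>p<N. (w ^ (N - k)) ^ p * (a m * (w ^ p) ^ m)) = a m * (\<Sum>p<N. (w ^ (m + N - k)) ^ p)"
          by (simp add: sum_distrib_left eqp)
      qed
      also have "\<dots> = (\<Sum>m. a m * (of_nat N * ind m))"
        using root_unity_sum[OF N1] unfolding w_def ind_def by (intro suminf_cong) simp
      finally show ?thesis .
    qed
    have nA: "norm A \<le> of_nat N * B"
    proof -
      have "norm A \<le> (\<Sum>p<N. norm ((w ^ (N - k)) ^ p * eval_fps f (w ^ p)))"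
        unfolding A_def by (rule norm_sum)
      also have "\<dots> \<le> (\<Sum>p<N. B)"
        by (intro sum_mono) (simp add: norm_mult norm_power nw bd nwp)
      finally show ?thesis by simp
    qed
    have summ1: "summable (\<lambda>m. a m)" using summ[of 0] by simp
    have summind: "summable (\<lambda>m. a m * ind m)"
      by (rule summable_norm_cancel, rule summable_comparison_test[OF _ sumn])
         (auto simp: ind_def norm_mult)
    have A2: "A / of_nat N = (\<Sum>m. a m * ind m)"
    proof -
      have "A = of_nat N * (\<Sum>m. a m * ind m)"
        using A_eq summind by (simp add: suminf_mult[symmetric] algebra_simps)
      thus ?thesis using N1 by simp
    qed
    have ak: "(\<lambda>m. if m = k then a m else 0) sums a k" by (rule sums_single)
    define e where "e m = ind m - (if m = k then 1 else 0)" for m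
    have diff: "A / of_nat N - a k = (\<Sum>m. a m * e m)"
    proof -
      have "(\<lambda>m. a m * ind m - (if m = k then a m else 0)) sums ((\<Sum>m. a m * ind m) - a k)"
        by (intro sums_diff ak summable_sums summind)
      moreover have "(\<lambda>m. a m * ind m - (if m = k then a m else 0)) = (\<lambda>m. a m * e m)"
        by (auto simp: e_def algebra_simps)
      ultimately show ?thesis using A2 sums_unique by fastforce
    qed
    have e0: "e m = 0" if "m < N" for m
    proof (cases "m = k")
      case True thus ?thesis using N by (simp add: e_def ind_def)
    next
      case False
      have "\<not> N dvd (m + N - k)"
      proof
        assume "N dvd (m + N - k)"
        moreover have "0 < m + N - k" "m + N - k < 2 * N" using N that by auto
        ultimately obtain c where c: "m + N - k = N * c" "0 < N * c" "N * c < 2 * N"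
          by (metis dvdE)
        hence "c < 2" "0 < c" by (simp_all add: mult.commute)
        hence "c = 1" by simp
        hence "m + N - k = N" using c by simp
        thus False using False N by simp
      qed
      thus ?thesis using False by (simp add: e_def ind_def)
    qed
    have ne: "norm (e m) \<le> (if N \<le> m then 1 else 0)" for m
      using e0[of m] by (auto simp: e_def ind_def)
    have sumT: "summable (\<lambda>m. norm (a m) * (if N \<le> m then 1 else 0))"
      by (rule summable_comparison_test[OF _ sumn]) auto
    have "norm (A / of_nat N - a k) \<le> (\<Sum>m. norm (a m) * (if N \<le> m then 1 else 0))"
    proof -
      have bnd: "norm (a m * e m) \<le> norm (a m) * (if N \<le> m then 1 else 0)" for m
        unfolding norm_mult by (rule mult_left_mono[OF ne]) simp
      have sae: "summable (\<lambda>m. norm (a m * e m))"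
        by (rule summable_comparison_test'[OF sumT, of 0]) (use bnd in auto)
      have "norm (\<Sum>m. a m * e m) \<le> (\<Sum>m. norm (a m * e m))"
        by (rule summable_norm[OF sae])
      also have "\<dots> \<le> (\<Sum>m. norm (a m) * (if N \<le> m then 1 else 0))"
        by (rule suminf_le[OF bnd sae sumT])
      finally show ?thesis using diff by simp
    qed
    also have "(\<Sum>m. norm (a m) * (if N \<le> m then 1 else 0)) = T N"
    proof -
      have "(\<Sum>m. norm (a m) * (if N \<le> m then 1 else 0)) = (\<Sum>m. norm (a (m + N)))"
        using suminf_split_initial_segment[OF sumT, of N] by simp
      moreover have "S = (\<Sum>m. norm (a (m + N))) + (\<Sum>m<N. norm (a m))"
        using suminf_split_initial_segment[OF sumn, of N] S_def by simp
      ultimately show ?thesis by (simp add: T_def)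
    qed
    finally have "norm (A / of_nat N - a k) \<le> T N" .
    moreover have "norm (A / of_nat N) \<le> B" using nA N1
      by (simp add: norm_divide field_simps)
    moreover have "norm (a k) - norm (A / of_nat N) \<le> norm (A / of_nat N - a k)"
      using norm_triangle_ineq2[of "a k" "A / of_nat N"] by (simp add: norm_minus_commute)
    ultimately show ?thesis by linarith
  qed
  have lim: "(\<lambda>N. B + T N) \<longlonglongrightarrow> B + 0" by (intro tendsto_intros T0)
  have ev: "eventually (\<lambda>N. norm (a k) \<le> B + T N) sequentially"
    using main by (auto simp: eventually_at_top_linorder intro!: exI[of _ "Suc k"])
  have "norm (a k) \<le> B + 0" by (rule tendsto_lowerbound[OF lim ev]) simp
  hence "norm (a k) \<le> B" by simp
  thus ?thesis by (simp add: a_def)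
qed

lemma fps_power_low:
  fixes f :: "complex fps"
  assumes "fps_nth f 0 = 0"
  shows "k < p \<Longrightarrow> fps_nth (f ^ p) k = 0"
proof (induction p arbitrary: k)
  case 0 thus ?case by simp
next
  case (Suc p)
  have "fps_nth (f * f ^ p) k = (\<Sum>i=0..k. fps_nth f i * fps_nth (f ^ p) (k - i))"
    by (rule fps_mult_nth)
  also have "\<dots> = 0"
  proof (intro sum.neutral ballI)
    fix i assume ik: "i \<in> {0..k}"
    show "fps_nth f i * fps_nth (f ^ p) (k - i) = 0"
    proof (cases "i = 0")
      case True thus ?thesis using assms by simp
    next
      case False thus ?thesis using Suc.IH[of "k - i"] Suc.prems ik by simp
    qed
  qed
  finally show ?case by simp
qed

lemma schwarz_fps:
  fixes f :: "complex fps"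
  assumes rad: "fps_conv_radius f > 1" and bd: "\<forall>z. norm z = 1 \<longrightarrow> norm (eval_fps f z) \<le> B"
    and f0: "fps_nth f 0 = 0" and t: "0 \<le> t" "t < 1"
  shows "norm (eval_fps f (of_real t)) \<le> B * t"
proof -
  have "norm (eval_fps f 1) \<le> B" using bd by simp
  hence B0: "0 \<le> B" using norm_ge_zero order_trans by blast
  define x where "x = norm (eval_fps f (of_real t))"
  define c where "c = 1 / (1 - t)"
  have c0: "c > 0" using t by (simp add: c_def)
  have tin: "ereal (norm (complex_of_real t)) < fps_conv_radius f"
    using t rad by (metis abs_of_nonneg ereal_less(3) less_trans norm_of_real one_ereal_def)
  have pw: "x ^ p \<le> (B * t) ^ p * c" for p
  proof -
    have radp: "fps_conv_radius (f ^ p) > 1" using rad fps_conv_radius_power[of f p] by simp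
    have bdp: "\<forall>z. norm z = 1 \<longrightarrow> norm (eval_fps (f ^ p) z) \<le> B ^ p"
    proof (intro allI impI)
      fix z :: complex assume z: "norm z = 1"
      have "ereal (norm z) < fps_conv_radius f" using z rad by (simp add: one_ereal_def)
      hence "eval_fps (f ^ p) z = eval_fps f z ^ p" by (rule eval_fps_power)
      thus "norm (eval_fps (f ^ p) z) \<le> B ^ p"
        using bd z by (simp add: norm_power power_mono)
    qed
    have cb: "norm (fps_nth (f ^ p) k) \<le> B ^ p" for k by (rule coeff_bound[OF radp bdp])
    have tinp: "ereal (norm (complex_of_real t)) < fps_conv_radius (f ^ p)"
      using tin fps_conv_radius_power[of f p] by (meson less_le_trans)
    have sn: "summable (\<lambda>k. norm (fps_nth (f ^ p) k * of_real t ^ k))"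
      by (rule norm_summable_fps[OF tinp])
    define g where "g k = (if k < p then 0 else B ^ p * t ^ k)" for k
    have gs: "g sums (B ^ p * t ^ p * c)"
    proof -
      have "(\<lambda>i. B ^ p * t ^ p * t ^ i) sums (B ^ p * t ^ p * (1 / (1 - t)))"
        by (intro sums_mult geometric_sums) (use t in auto)
      hence "(\<lambda>i. g (i + p)) sums (B ^ p * t ^ p * c)"
        by (simp add: g_def c_def power_add mult_ac)
      thus ?thesis by (subst (asm) sums_zero_iff_shift) (auto simp: g_def)
    qed
    have le: "norm (fps_nth (f ^ p) k * of_real t ^ k) \<le> g k" for k
    proof (cases "k < p")
      case True thus ?thesis using fps_power_low[OF f0 True] by (simp add: g_def)
    next
      case False thus ?thesis using cb[of k] t
        by (simp add: g_def norm_mult norm_power mult_right_mono)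
    qed
    have "norm (eval_fps (f ^ p) (of_real t)) \<le> (\<Sum>k. norm (fps_nth (f ^ p) k * of_real t ^ k))"
      unfolding eval_fps_def by (rule summable_norm[OF sn])
    also have "\<dots> \<le> suminf g" by (rule suminf_le[OF le sn]) (use gs in \<open>simp add: sums_iff\<close>)
    also have "\<dots> = (B * t) ^ p * c" using gs by (simp add: sums_iff power_mult_distrib)
    finally have "norm (eval_fps (f ^ p) (of_real t)) \<le> (B * t) ^ p * c" .
    moreover have "eval_fps (f ^ p) (of_real t) = eval_fps f (of_real t) ^ p"
      by (rule eval_fps_power[OF tin])
    ultimately show ?thesis by (simp add: x_def norm_power)
  qed
  have le: "x \<le> B * t * root p c" if p: "p > 0" for p
  proof -
    have "x ^ p \<le> (B * t * root p c) ^ p"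
      using pw[of p] p c0 by (simp add: power_mult_distrib real_root_pow_pos2)
    moreover obtain q where "p = Suc q" using p by (cases p) auto
    ultimately show ?thesis using power_le_imp_le_base[of x q "B * t * root p c"] B0 t c0 by simp
  qed
  have lim: "(\<lambda>p. B * t * root p c) \<longlonglongrightarrow> B * t * 1"
    by (intro tendsto_intros LIMSEQ_root_const c0)
  have ev: "eventually (\<lambda>p. x \<le> B * t * root p c) sequentially"
    using le by (auto simp: eventually_at_top_linorder intro!: exI[of _ 1])
  have "x \<le> B * t * 1" by (rule tendsto_lowerbound[OF lim ev]) simp
  thus ?thesis by (simp add: x_def)
qed




definition cinner :: "('h::real_inner \<Rightarrow> 'h) \<Rightarrow> 'h \<Rightarrow> 'h \<Rightarrow> complex" where
  "cinner J x e = Complex (inner x e) (inner x (J e))"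

lemma lin_add: "linear f \<Longrightarrow> f (x + y) = f x + f y" by (simp add: linear_iff)
lemma lin_scale: "linear f \<Longrightarrow> f (r *\<^sub>R x) = r *\<^sub>R f x" by (simp add: linear_iff)
lemma lin_sum: "linear f \<Longrightarrow> f (\<Sum>i\<in>A. g i) = (\<Sum>i\<in>A. f (g i))"
  by (induction A rule: infinite_finite_induct) (auto simp: lin_add linear_0)

context
  fixes J :: "'h::{real_inner,complete_space} \<Rightarrow> 'h"
  assumes J: "cstruct J"
begin

lemma J_lin: "linear J" using J by (simp add: cstruct_def)
lemma J_J [simp]: "J (J x) = - x" using J by (simp add: cstruct_def)
lemma J_inner: "inner (J x) (J y) = inner x y" using J by (simp add: cstruct_def)
lemma J_add: "J (x + y) = J x + J y" by (rule lin_add[OF J_lin])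
lemma J_scale: "J (r *\<^sub>R x) = r *\<^sub>R J x" by (rule lin_scale[OF J_lin])
lemma J_norm [simp]: "norm (J x) = norm x"
  using J_inner[of x x] by (simp add: norm_eq_sqrt_inner)
lemma J_bl: "bounded_linear J"
  by (rule bounded_linear_intro[where K=1]) (auto simp: J_add J_scale)
lemma inner_J_left: "inner (J x) y = - inner x (J y)"
  using J_inner[of "J x" y] by simp
lemma inner_J_self [simp]: "inner x (J x) = 0"
proof -
  have "inner x (J x) = inner (J x) x" by (simp add: inner_commute)
  also have "\<dots> = - inner x (J x)" by (rule inner_J_left)
  finally show ?thesis by simp
qed

lemma cs_add: "cscale J c (x + y) = cscale J c x + cscale J c y"
  by (simp add: cscale_def J_add algebra_simps)
lemma cs_scaleR: "cscale J c (r *\<^sub>R x) = r *\<^sub>R cscale J c x"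
  by (simp add: cscale_def J_scale algebra_simps)
lemma cs_lin: "linear (cscale J c)" by (rule linearI) (simp_all add: cs_add cs_scaleR)
lemma cs_sum: "cscale J c (\<Sum>i\<in>A. g i) = (\<Sum>i\<in>A. cscale J c (g i))"
  by (rule lin_sum[OF cs_lin])
lemma cs_0 [simp]: "cscale J c 0 = 0" using linear_0[OF cs_lin] .
lemma cs_addc: "cscale J (c + d) x = cscale J c x + cscale J d x"
  by (simp add: cscale_def algebra_simps)
lemma cs_zero [simp]: "cscale J 0 x = 0" by (simp add: cscale_def)
lemma cs_sumc: "cscale J (\<Sum>i\<in>A. c i) x = (\<Sum>i\<in>A. cscale J (c i) x)"
  by (induction A rule: infinite_finite_induct) (auto simp: cs_addc)
lemma cs_J: "cscale J c (J x) = J (cscale J c x)"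
  by (simp add: cscale_def J_add J_scale)
lemma cs_mult: "cscale J (c * d) x = cscale J c (cscale J d x)"
  by (simp add: cscale_def J_add J_scale algebra_simps)
lemma cs_one [simp]: "cscale J 1 x = x" by (simp add: cscale_def)
lemma cs_real [simp]: "cscale J (complex_of_real r) x = r *\<^sub>R x" by (simp add: cscale_def)
lemma cs_norm: "norm (cscale J c x) = cmod c * norm x"
proof -
  have "(norm (cscale J c x))^2 = ((Re c)^2 + (Im c)^2) * inner x x"
    apply (subst power2_norm_eq_inner)
    apply (simp add: cscale_def inner_add_left inner_add_right J_inner inner_J_left)
    apply (simp add: inner_commute[of "J x" x] algebra_simps power2_eq_square)
    done
  also have "\<dots> = (cmod c * norm x)^2"
    by (simp add: cmod_def power_mult_distrib power2_norm_eq_inner)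
  finally show ?thesis by (simp add: power2_eq_iff_nonneg)
qed
lemma cs_bl: "bounded_linear (cscale J c)"
  by (rule bounded_linear_intro[where K="cmod c"]) (simp_all add: cs_add cs_scaleR cs_norm mult.commute)
lemma cs_comm: "cscale J c (cscale J d x) = cscale J d (cscale J c x)"
  by (simp add: cs_mult[symmetric] mult.commute)

lemma bop_cs: "bop J T \<Longrightarrow> T (cscale J c x) = cscale J c (T x)"
proof -
  assume "bop J T"
  hence lin: "linear T" and c: "\<And>x. T (J x) = J (T x)" by (auto simp: bop_def bounded_linear.linear)
  show ?thesis by (simp add: cscale_def lin_add[OF lin] lin_scale[OF lin] c)
qed

lemma bop_cscale: "bop J (cscale J c)" by (simp add: bop_def cs_bl cs_J)
lemma bop_comp: "bop J S \<Longrightarrow> bop J T \<Longrightarrow> bop J (S \<circ> T)"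
  by (auto simp: bop_def o_def intro: bounded_linear_compose)
lemma bop_sum: "(\<And>i. i \<in> A \<Longrightarrow> bop J (T i)) \<Longrightarrow> bop J (\<lambda>x. \<Sum>i\<in>A. T i x)"
  unfolding bop_def
proof (intro conjI allI)
  assume T: "\<And>i. i \<in> A \<Longrightarrow> bounded_linear (T i) \<and> (\<forall>x. T i (J x) = J (T i x))"
  show "bounded_linear (\<lambda>x. \<Sum>i\<in>A. T i x)" using T by (auto intro!: bounded_linear_sum)
  fix x
  show "(\<Sum>i\<in>A. T i (J x)) = J (\<Sum>i\<in>A. T i x)"
    using T by (simp add: lin_sum[OF J_lin])
qed

lemma ci_bl: "bounded_linear (\<lambda>x. cinner J x e)"
proof (rule bounded_linear_intro[where K="norm e * 2"])
  fix x y show "cinner J (x + y) e = cinner J x e + cinner J y e"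
    by (simp add: cinner_def inner_add_left complex_eq_iff)
next
  fix r x show "cinner J (r *\<^sub>R x) e = r *\<^sub>R cinner J x e"
    by (simp add: cinner_def complex_eq_iff)
next
  fix x
  have "norm (cinner J x e) \<le> \<bar>inner x e\<bar> + \<bar>inner x (J e)\<bar>"
    unfolding cinner_def cmod_def by (simp add: sqrt_sum_squares_le_sum_abs)
  also have "\<dots> \<le> norm x * norm e + norm x * norm (J e)"
    by (intro add_mono Cauchy_Schwarz_ineq2)
  finally have "norm (cinner J x e) \<le> norm x * norm e + norm x * norm (J e)" .
  thus "norm (cinner J x e) \<le> norm x * (norm e * 2)" by (simp add: algebra_simps)
qed
lemma ci_cs: "cinner J (cscale J c x) e = c * cinner J x e"
  by (simp add: cinner_def cscale_def complex_eq_iff inner_add_left inner_J_left)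
lemma ci_self: "cinner J x x = complex_of_real ((norm x)^2)"
  by (simp add: cinner_def complex_eq_iff power2_norm_eq_inner)
lemma ci_norm: "norm (cinner J x e) \<le> norm x * norm e"
proof -
  define a where "a = inner x e"
  define b where "b = inner x (J e)"
  define u where "u = a *\<^sub>R e + b *\<^sub>R J e"
  have xu: "inner x u = a^2 + b^2"
    by (simp add: u_def inner_add_right a_def b_def power2_eq_square)
  have uu: "(norm u)^2 = (a^2 + b^2) * inner e e"
    apply (subst power2_norm_eq_inner)
    apply (simp add: u_def inner_add_left inner_add_right J_inner inner_J_left)
    apply (simp add: inner_commute[of "J e" e] algebra_simps power2_eq_square)
    done
  hence uu: "(norm u)^2 = (a^2 + b^2) * (norm e)^2" by (simp add: power2_norm_eq_inner)
  have nu: "norm u = sqrt (a^2 + b^2) * norm e"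
  proof -
    have "norm u = sqrt ((norm u)^2)" by simp
    also have "\<dots> = sqrt (a^2 + b^2) * norm e" by (simp add: uu real_sqrt_mult)
    finally show ?thesis .
  qed
  have "a^2 + b^2 \<le> norm x * norm u" using xu Cauchy_Schwarz_ineq2[of x u] by simp
  hence "(sqrt (a^2 + b^2))^2 \<le> norm x * (sqrt (a^2 + b^2) * norm e)" by (simp add: nu)
  hence q: "sqrt (a^2 + b^2) * sqrt (a^2 + b^2) \<le> sqrt (a^2 + b^2) * (norm x * norm e)"
    by (simp only: power2_eq_square mult_ac)
  have "sqrt (a^2 + b^2) \<le> norm x * norm e"
  proof (cases "sqrt (a^2 + b^2) = 0")
    case False
    hence pos: "sqrt (a^2 + b^2) > 0" by (simp add: order_le_neq_trans)
    show ?thesis using q mult_le_cancel_left_pos[OF pos] by blast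
  qed simp
  thus ?thesis by (simp add: cinner_def cmod_def a_def b_def)
qed

end




lemma bl_zero: "bounded_linear f \<Longrightarrow> f 0 = 0" by (simp add: linear_0 bounded_linear.linear)
lemma bl_scale: "bounded_linear f \<Longrightarrow> f (r *\<^sub>R x) = r *\<^sub>R f x"
  by (rule lin_scale[OF bounded_linear.linear])
lemma bl_sum: "bounded_linear f \<Longrightarrow> f (\<Sum>i\<in>A. g i) = (\<Sum>i\<in>A. f (g i))"
  by (rule lin_sum[OF bounded_linear.linear])

lemma rn_le:
  assumes "\<And>h. (\<Sum>i<n. (norm (h i))\<^sup>2) \<le> 1 \<Longrightarrow> norm (\<Sum>i<n. T i (h i)) \<le> R"
  shows "rownorm n T \<le> R"
  unfolding rownorm_def
proof (rule cSup_least)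
  show "{norm (\<Sum>i<n. T i (h i)) |h. (\<Sum>i<n. (norm (h i))\<^sup>2) \<le> 1} \<noteq> {}"
    by (auto intro!: exI[of _ "\<lambda>_. 0"])
qed (use assms in auto)

lemma norm_le_one_of_sum:
  fixes h :: "nat \<Rightarrow> 'a::real_normed_vector"
  assumes "(\<Sum>i<n. (norm (h i))\<^sup>2) \<le> 1" "i < n"
  shows "norm (h i) \<le> 1"
proof -
  have "(norm (h i))\<^sup>2 \<le> (\<Sum>i<n. (norm (h i))\<^sup>2)"
    by (rule member_le_sum) (use assms in auto)
  hence "(norm (h i))\<^sup>2 \<le> 1\<^sup>2" using assms by simp
  thus ?thesis by (rule power2_le_imp_le) simp
qed

lemma rn_bdd:
  fixes T :: "nat \<Rightarrow> 'a::real_normed_vector \<Rightarrow> 'b::real_normed_vector"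
  assumes bl: "\<forall>i<n. bounded_linear (T i)"
  shows "bdd_above {norm (\<Sum>i<n. T i (h i)) |h. (\<Sum>i<n. (norm (h i))\<^sup>2) \<le> 1}"
proof -
  have "\<forall>i<n. \<exists>K>0. \<forall>x. norm (T i x) \<le> norm x * K"
    using bl bounded_linear.pos_bounded by blast
  then obtain K where K: "\<And>i x. i < n \<Longrightarrow> norm (T i x) \<le> norm x * K i" "\<And>i. i < n \<Longrightarrow> K i > 0"
    by metis
  show ?thesis
  proof (rule bdd_aboveI, safe)
    fix h :: "nat \<Rightarrow> 'a" assume h: "(\<Sum>i<n. (norm (h i))\<^sup>2) \<le> 1"
    have "norm (\<Sum>i<n. T i (h i)) \<le> (\<Sum>i<n. norm (T i (h i)))" by (rule norm_sum)
    also have "\<dots> \<le> (\<Sum>i<n. K i)"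
    proof (rule sum_mono)
      fix i assume i: "i \<in> {..<n}"
      have "norm (T i (h i)) \<le> norm (h i) * K i" using K i by simp
      also have "\<dots> \<le> 1 * K i"
        using norm_le_one_of_sum[OF h, of i] i K(2)[of i] by (intro mult_right_mono) auto
      finally show "norm (T i (h i)) \<le> K i" by simp
    qed
    finally show "norm (\<Sum>i<n. T i (h i)) \<le> (\<Sum>i<n. K i)" .
  qed
qed

lemma rn_ge:
  assumes "\<forall>i<n. bounded_linear (T i)" "(\<Sum>i<n. (norm (h i))\<^sup>2) \<le> 1"
  shows "norm (\<Sum>i<n. T i (h i)) \<le> rownorm n T"
  unfolding rownorm_def by (rule cSup_upper) (use assms rn_bdd in auto)

lemma rn_nonneg:
  assumes bl: "\<forall>i<n. bounded_linear (T i)"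
  shows "0 \<le> rownorm n T"
proof -
  have "norm (\<Sum>i<n. T i ((\<lambda>_. 0) i)) \<le> rownorm n T" by (rule rn_ge[OF bl]) simp
  thus ?thesis by (meson norm_ge_zero order_trans)
qed

lemma rn_scale:
  assumes bl: "\<forall>i<n. bounded_linear (T i)"
  shows "norm (\<Sum>i<n. T i (h i)) \<le> rownorm n T * sqrt (\<Sum>i<n. (norm (h i))\<^sup>2)"
proof (cases "(\<Sum>i<n. (norm (h i))\<^sup>2) = 0")
  case True
  hence "\<forall>i\<in>{..<n}. (norm (h i))\<^sup>2 = 0" by (subst (asm) sum_nonneg_eq_0_iff) auto
  hence "\<forall>i<n. h i = 0" by simp
  hence "(\<Sum>i<n. T i (h i)) = 0" using bl by (simp add: bl_zero)
  thus ?thesis using rn_nonneg[OF bl] by (simp add: sum_nonneg)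
next
  case False
  define S where "S = (\<Sum>i<n. (norm (h i))\<^sup>2)"
  have S0: "S > 0" using False unfolding S_def by (metis sum_nonneg zero_le_power2 order_le_neq_trans)
  define s where "s = sqrt S"
  have s0: "s > 0" using S0 by (simp add: s_def)
  define h' where "h' i = (1 / s) *\<^sub>R h i" for i
  have "(\<Sum>i<n. (norm (h' i))\<^sup>2) = (\<Sum>i<n. (norm (h i))\<^sup>2) / s\<^sup>2"
    using s0 by (simp add: h'_def power_divide sum_divide_distrib)
  also have "\<dots> = 1" using S0 by (simp add: s_def S_def)
  finally have h'1: "(\<Sum>i<n. (norm (h' i))\<^sup>2) \<le> 1" by simp
  have "(\<Sum>i<n. T i (h' i)) = (1 / s) *\<^sub>R (\<Sum>i<n. T i (h i))"
    using bl by (simp add: h'_def bl_scale scaleR_sum_right)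
  hence "norm (\<Sum>i<n. T i (h i)) / s \<le> rownorm n T"
    using rn_ge[OF bl h'1] s0 by simp
  thus ?thesis using s0 by (simp add: s_def S_def field_simps)
qed

lemma words_0: "words n 0 = {[]}" by (auto simp: words_def)
lemma words_finite: "finite (words n k)"
  unfolding words_def using finite_lists_length_eq[of "{..<n}" k] by (simp add: conj_commute)
lemma words_Suc: "words n (Suc k) = (\<lambda>(i, b). i # b) ` ({..<n} \<times> words n k)"
  by (auto simp: words_def length_Suc_conv image_iff)
lemma words_1: "words n 1 = (\<lambda>i. [i]) ` {..<n}"
  by (auto simp: words_def length_Suc_conv)
lemma sum_words_Suc:
  "(\<Sum>a\<in>words n (Suc k). f a) = (\<Sum>i<n. \<Sum>b\<in>words n k. f (i # b))"
proof -
  have inj: "inj_on (\<lambda>(i, b). i # b) ({..<n} \<times> words n k)" by (auto simp: inj_on_def)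
  have "(\<Sum>a\<in>words n (Suc k). f a) = (\<Sum>p\<in>{..<n} \<times> words n k. f ((\<lambda>(i, b). i # b) p))"
    unfolding words_Suc by (rule sum.reindex[OF inj, unfolded o_def])
  also have "\<dots> = (\<Sum>(i, b)\<in>{..<n} \<times> words n k. f (i # b))"
    by (intro sum.cong) auto
  also have "\<dots> = (\<Sum>i<n. \<Sum>b\<in>words n k. f (i # b))"
    by (rule sum.cartesian_product[symmetric])
  finally show ?thesis .
qed
lemma sum_words_1: "(\<Sum>a\<in>words n 1. f a) = (\<Sum>i<n. f [i])"
  unfolding words_1 by (subst sum.reindex) (auto simp: inj_on_def)

lemma wordop_Nil [simp]: "wordop X [] = id" by (simp add: wordop_def)
lemma wordop_Cons [simp]: "wordop X (i # b) = X i \<circ> wordop X b" by (simp add: wordop_def)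

lemma words_set: "a \<in> words n k \<Longrightarrow> set a \<subseteq> {..<n}" by (simp add: words_def)
lemma words_Cons: "i # b \<in> words n (Suc k) \<longleftrightarrow> i < n \<and> b \<in> words n k"
  by (auto simp: words_def)

context
  fixes J :: "'h::{real_inner,complete_space} \<Rightarrow> 'h"
  assumes J: "cstruct J"
begin

lemma word_est:
  assumes X: "\<forall>i<n. bop J (X i)"
  shows "norm (\<Sum>a\<in>words n k. wordop X a (h a)) \<le> (rownorm n X)^k * sqrt (\<Sum>a\<in>words n k. (norm (h a))\<^sup>2)"
proof (induction k arbitrary: h)
  case 0 thus ?case by (simp add: words_0)
next
  case (Suc k)
  have bl: "\<forall>i<n. bounded_linear (X i)" using X by (simp add: bop_def)
  define R where "R = rownorm n X"
  have R0: "R \<ge> 0" unfolding R_def by (rule rn_nonneg[OF bl])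
  define g where "g i = (\<Sum>b\<in>words n k. wordop X b (h (i # b)))" for i
  have "(\<Sum>a\<in>words n (Suc k). wordop X a (h a)) = (\<Sum>i<n. X i (g i))"
    unfolding sum_words_Suc g_def
    by (intro sum.cong refl) (use bl in \<open>simp add: bl_sum\<close>)
  hence "norm (\<Sum>a\<in>words n (Suc k). wordop X a (h a)) \<le> R * sqrt (\<Sum>i<n. (norm (g i))\<^sup>2)"
    using rn_scale[OF bl, of g] by (simp add: R_def)
  also have "\<dots> \<le> R * sqrt (\<Sum>i<n. R^(2*k) * (\<Sum>b\<in>words n k. (norm (h (i # b)))\<^sup>2))"
  proof (intro mult_left_mono R0 real_sqrt_le_mono sum_mono)
    fix i
    have "norm (g i) \<le> R^k * sqrt (\<Sum>b\<in>words n k. (norm (h (i # b)))\<^sup>2)"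
      unfolding g_def R_def using Suc.IH[of "\<lambda>b. h (i # b)"] by simp
    hence "(norm (g i))\<^sup>2 \<le> (R^k * sqrt (\<Sum>b\<in>words n k. (norm (h (i # b)))\<^sup>2))\<^sup>2"
      by (intro power_mono) auto
    also have "\<dots> = R^(2*k) * (\<Sum>b\<in>words n k. (norm (h (i # b)))\<^sup>2)"
      by (simp add: power_mult_distrib power_mult[symmetric] mult.commute sum_nonneg)
    finally show "(norm (g i))\<^sup>2 \<le> R^(2*k) * (\<Sum>b\<in>words n k. (norm (h (i # b)))\<^sup>2)" .
  qed
  also have "\<dots> = R^(Suc k) * sqrt (\<Sum>a\<in>words n (Suc k). (norm (h a))\<^sup>2)"
  proof -
    have "(\<Sum>i<n. R^(2*k) * (\<Sum>b\<in>words n k. (norm (h (i # b)))\<^sup>2))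
          = R^(2*k) * (\<Sum>a\<in>words n (Suc k). (norm (h a))\<^sup>2)"
      by (simp add: sum_words_Suc sum_distrib_left)
    moreover have "sqrt (R^(2*k)) = R^k"
    proof -
      have "R^(2*k) = (R^k)^2" by (simp add: power_mult[symmetric] mult.commute)
      thus ?thesis using R0 by simp
    qed
    ultimately show ?thesis by (simp add: real_sqrt_mult)
  qed
  finally show ?case by (simp add: R_def)
qed

lemma wordop_cs:
  assumes X: "\<forall>i<n. bop J (X i)" and a: "set a \<subseteq> {..<n}"
  shows "wordop X a (cscale J c x) = cscale J c (wordop X a x)"
  using a
proof (induction a)
  case Nil thus ?case by simp
next
  case (Cons i b)
  thus ?case using X bop_cs[OF J] by simp
qed

lemma homog_est:
  assumes X: "\<forall>i<n. bop J (X i)"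
  shows "norm (homog J n a k X x) \<le> (rownorm n X)^k * sqrt (\<Sum>b\<in>words n k. (cmod (a b))\<^sup>2) * norm x"
proof -
  have "homog J n a k X x = (\<Sum>b\<in>words n k. wordop X b (cscale J (a b) x))"
    unfolding homog_def using wordop_cs[OF X] words_set by (intro sum.cong refl) auto
  hence "norm (homog J n a k X x) \<le> (rownorm n X)^k * sqrt (\<Sum>b\<in>words n k. (norm (cscale J (a b) x))\<^sup>2)"
    using word_est[OF X, where k=k and h="\<lambda>b. cscale J (a b) x"] by simp
  also have "(\<Sum>b\<in>words n k. (norm (cscale J (a b) x))\<^sup>2) = (\<Sum>b\<in>words n k. (cmod (a b))\<^sup>2) * (norm x)\<^sup>2"
    by (simp add: cs_norm[OF J] power_mult_distrib sum_distrib_right)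
  finally show ?thesis by (simp add: real_sqrt_mult mult_ac)
qed

definition sclt :: "complex \<Rightarrow> (nat \<Rightarrow> 'h \<Rightarrow> 'h) \<Rightarrow> nat \<Rightarrow> 'h \<Rightarrow> 'h" where
  "sclt c X = (\<lambda>i. cscale J c \<circ> X i)"

lemma sclt_bop: "bop J (X i) \<Longrightarrow> bop J (sclt c X i)"
  unfolding sclt_def by (rule bop_comp[OF J bop_cscale[OF J]])

lemma wordop_sclt:
  assumes X: "\<forall>i<n. bop J (X i)" and a: "set a \<subseteq> {..<n}"
  shows "wordop (sclt c X) a x = cscale J (c ^ length a) (wordop X a x)"
  using a
proof (induction a arbitrary: x)
  case Nil thus ?case by (simp add: cs_one[OF J])
next
  case (Cons i b)
  hence "i < n" by simp
  thus ?case using Cons X bop_cs[OF J] by (simp add: sclt_def cs_mult[OF J])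
qed

lemma homog_sclt:
  assumes X: "\<forall>i<n. bop J (X i)"
  shows "homog J n a k (sclt c X) x = cscale J (c ^ k) (homog J n a k X x)"
  unfolding homog_def cs_sum[OF J]
  by (intro sum.cong refl) (simp add: wordop_sclt[OF X] words_set cs_comm[OF J], simp add: words_def)

lemma rownorm_sclt:
  assumes X: "\<forall>i<n. bop J (X i)"
  shows "rownorm n (sclt c X) \<le> cmod c * rownorm n X"
proof (rule rn_le)
  fix h :: "nat \<Rightarrow> 'h" assume h: "(\<Sum>i<n. (norm (h i))\<^sup>2) \<le> 1"
  have bl: "\<forall>i<n. bounded_linear (X i)" using X by (simp add: bop_def)
  have "(\<Sum>i<n. sclt c X i (h i)) = cscale J c (\<Sum>i<n. X i (h i))"
    by (simp add: sclt_def cs_sum[OF J])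
  hence "norm (\<Sum>i<n. sclt c X i (h i)) = cmod c * norm (\<Sum>i<n. X i (h i))"
    by (simp add: cs_norm[OF J])
  also have "\<dots> \<le> cmod c * rownorm n X" by (intro mult_left_mono rn_ge[OF bl h]) simp
  finally show "norm (\<Sum>i<n. sclt c X i (h i)) \<le> cmod c * rownorm n X" .
qed

end




lemma holo_decay:
  assumes holo: "free_holo n a" and tau: "\<tau> > 1"
  shows "eventually (\<lambda>k. sqrt (\<Sum>b\<in>words n k. (cmod (a b))\<^sup>2) \<le> \<tau>^k) sequentially"
proof -
  define A where "A k = (\<Sum>b\<in>words n k. (cmod (a b))\<^sup>2)" for k
  have l1: "limsup (\<lambda>k. ereal (root (2 * k) (A k))) \<le> 1"
    using holo unfolding free_holo_def A_def .
  have "(1::ereal) < ereal \<tau>" using tau by simp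
  hence "limsup (\<lambda>k. ereal (root (2 * k) (A k))) < ereal \<tau>"
    using l1 by (rule le_less_trans[rotated])
  hence ev: "eventually (\<lambda>k. ereal (root (2 * k) (A k)) < ereal \<tau>) sequentially"
    by (rule Limsup_lessD)
  have "eventually (\<lambda>k. sqrt (A k) \<le> \<tau>^k) sequentially"
    using ev eventually_ge_at_top[of 1]
  proof eventually_elim
    case (elim k)
    have A0: "A k \<ge> 0" unfolding A_def by (rule sum_nonneg) simp
    have rt: "root (2 * k) (A k) < \<tau>" using elim by simp
    have "A k = root (2 * k) (A k) ^ (2 * k)" using elim A0 by (simp add: real_root_pow_pos2)
    also have "\<dots> \<le> \<tau> ^ (2 * k)"
      by (rule power_mono) (use rt A0 in \<open>auto simp: real_root_ge_zero\<close>)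
    finally have "sqrt (A k) \<le> sqrt ((\<tau> ^ k)\<^sup>2)"
      by (simp add: power_mult[symmetric] mult.commute)
    thus ?case using tau by simp
  qed
  thus ?thesis by (simp add: A_def)
qed

lemma summable_Cauchy_cs:
  fixes f :: "nat \<Rightarrow> 'a::{real_normed_vector,complete_space}"
  assumes r: "\<forall>e>0. \<exists>N. \<forall>m\<ge>N. \<forall>n. norm (sum f {m..<n}) < e"
  shows "summable f"
  unfolding summable_iff_convergent Cauchy_convergent_iff [symmetric] Cauchy_iff
proof clarify
  fix e :: real
  assume "0 < e"
  with r obtain N where N: "\<And>m n. m \<ge> N \<Longrightarrow> norm (sum f {m..<n}) < e"
    by blast
  have "norm (sum f {..<m} - sum f {..<n}) < e" if "m\<ge>N" "n\<ge>N" for m n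
  proof (cases m n rule: linorder_class.le_cases)
    assume "m \<le> n"
    then show ?thesis
      by (metis N finite_lessThan lessThan_minus_lessThan lessThan_subset_iff norm_minus_commute sum_diff \<open>m\<ge>N\<close>)
  next
    assume "n \<le> m"
    then show ?thesis
      by (metis N finite_lessThan lessThan_minus_lessThan lessThan_subset_iff sum_diff \<open>n\<ge>N\<close>)
  qed
  then show "\<exists>M. \<forall>m\<ge>M. \<forall>n\<ge>M. norm (sum f {..<m} - sum f {..<n}) < e"
    by blast
qed

lemma summable_norm_cancel_cs:
  fixes f :: "nat \<Rightarrow> 'a::{real_normed_vector,complete_space}"
  assumes s: "summable (\<lambda>n. norm (f n))"
  shows "summable f"
proof (rule summable_Cauchy_cs, intro allI impI)
  fix e :: real assume e: "e > 0"
  from s e obtain N where N: "\<And>m n. m \<ge> N \<Longrightarrow> norm (\<Sum>i\<in>{m..<n}. norm (f i)) < e"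
    unfolding summable_Cauchy by blast
  have "norm (sum f {m..<n}) < e" if "m \<ge> N" for m n
  proof -
    have "norm (sum f {m..<n}) \<le> (\<Sum>i\<in>{m..<n}. norm (f i))" by (rule norm_sum)
    also have "\<dots> \<le> norm (\<Sum>i\<in>{m..<n}. norm (f i))" by simp
    finally show ?thesis using N[OF that, of n] by linarith
  qed
  thus "\<exists>N. \<forall>m\<ge>N. \<forall>n. norm (sum f {m..<n}) < e" by blast
qed

lemma summable_cmp_cs:
  fixes f :: "nat \<Rightarrow> 'a::{real_normed_vector,complete_space}"
  assumes "eventually (\<lambda>n. norm (f n) \<le> g n) sequentially" "summable g"
  shows "summable f"
  by (rule summable_norm_cancel_cs, rule summable_comparison_test_ev[OF _ assms(2)]) (use assms(1) in simp)

context
  fixes J :: "'h::{real_inner,complete_space} \<Rightarrow> 'h"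
  assumes J: "cstruct J"
begin

lemma key_series:
  fixes a :: "nat \<Rightarrow> nat list \<Rightarrow> complex" and Y :: "nat \<Rightarrow> 'h \<Rightarrow> 'h" and h :: "nat \<Rightarrow> 'h"
  assumes holo: "\<forall>j<m. free_holo n (a j)" and Y: "\<forall>i<n. bop J (Y i)" and R1: "rownorm n Y < 1"
  defines "C \<equiv> \<lambda>k. \<Sum>j<m. homog J n (a j) k Y (h j)"
  shows "fps_conv_radius (Abs_fps (\<lambda>k. cinner J (C k) e)) > 1"
    and "cmod c \<le> 1 \<Longrightarrow> eval_fps (Abs_fps (\<lambda>k. cinner J (C k) e)) c
            = cinner J (\<Sum>j<m. freeval J n (a j) (sclt J c Y) (h j)) e"
proof -
  define R where "R = rownorm n Y"
  have bl: "\<forall>i<n. bounded_linear (Y i)" using Y by (simp add: bop_def)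
  have R0: "R \<ge> 0" unfolding R_def by (rule rn_nonneg[OF bl])
  have R1': "R < 1" using R1 by (simp add: R_def)
  define \<tau> where "\<tau> = 2 / (1 + R)"
  have tau: "\<tau> > 1" using R0 R1' by (simp add: \<tau>_def field_simps)
  define q where "q = R * \<tau>"
  have q0: "q \<ge> 0" and q1: "q < 1" using R0 R1' by (auto simp: q_def \<tau>_def field_simps)
  have evh: "eventually (\<lambda>k. \<forall>j\<in>{..<m}. \<forall>x. norm (homog J n (a j) k Y x) \<le> q^k * norm x) sequentially"
  proof (rule eventually_ball_finite)
    show "\<forall>j\<in>{..<m}. eventually (\<lambda>k. \<forall>x. norm (homog J n (a j) k Y x) \<le> q^k * norm x) sequentially"
    proof
      fix j assume "j \<in> {..<m}"
      hence "free_holo n (a j)" using holo by simp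
      from holo_decay[OF this tau]
      show "eventually (\<lambda>k. \<forall>x. norm (homog J n (a j) k Y x) \<le> q^k * norm x) sequentially"
      proof eventually_elim
        case (elim k)
        show ?case
        proof
          fix x
          have "norm (homog J n (a j) k Y x) \<le> R^k * sqrt (\<Sum>b\<in>words n k. (cmod (a j b))\<^sup>2) * norm x"
            using homog_est[OF J Y] by (simp add: R_def)
          also have "\<dots> \<le> R^k * \<tau>^k * norm x"
            by (intro mult_right_mono mult_left_mono elim) (use R0 in auto)
          finally show "norm (homog J n (a j) k Y x) \<le> q^k * norm x"
            by (simp add: q_def power_mult_distrib)
        qed
      qed
    qed
  qed simp
  define H where "H = (\<Sum>j<m. norm (h j))"
  have evC: "eventually (\<lambda>k. norm (C k) \<le> q^k * H) sequentially"
    using evh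
  proof eventually_elim
    case (elim k)
    have "norm (C k) \<le> (\<Sum>j<m. norm (homog J n (a j) k Y (h j)))"
      unfolding C_def by (rule norm_sum)
    also have "\<dots> \<le> (\<Sum>j<m. q^k * norm (h j))" by (intro sum_mono) (use elim in auto)
    finally show ?case by (simp add: H_def sum_distrib_left)
  qed
  define d where "d k = cinner J (C k) e" for k
  have d_eq: "(\<lambda>k. cinner J (C k) e) = d" unfolding d_def by (rule refl)
  show "fps_conv_radius (Abs_fps (\<lambda>k. cinner J (C k) e)) > 1"
  proof -
    define \<rho> where "\<rho> = 2 / (1 + q)"
    have rho1: "\<rho> > 1" and rq: "\<rho> * q < 1" and rq0: "\<rho> * q \<ge> 0"
      using q0 q1 by (auto simp: \<rho>_def field_simps)
    have "summable (\<lambda>k. d k * of_real \<rho> ^ k)"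
    proof (rule summable_comparison_test_ev)
      show "eventually (\<lambda>k. norm (d k * of_real \<rho> ^ k) \<le> (\<rho> * q)^k * (H * norm e)) sequentially"
        using evC
      proof eventually_elim
        case (elim k)
        have "norm (d k * of_real \<rho> ^ k) = norm (d k) * \<rho>^k"
          using rho1 by (simp add: norm_mult norm_power)
        also have "\<dots> \<le> (norm (C k) * norm e) * \<rho>^k"
          unfolding d_def by (intro mult_right_mono ci_norm[OF J]) (use rho1 in auto)
        also have "\<dots> \<le> (q^k * H * norm e) * \<rho>^k"
          by (intro mult_right_mono elim) (use rho1 in auto)
        finally show ?case by (simp add: power_mult_distrib mult_ac)
      qed
      show "summable (\<lambda>k. (\<rho> * q)^k * (H * norm e))"
        by (intro summable_mult2 summable_geometric) (use rq rq0 in auto)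
    qed
    hence "conv_radius d \<ge> norm (of_real \<rho> :: complex)" by (rule conv_radius_geI)
    hence "conv_radius d \<ge> ereal \<rho>" using rho1 by simp
    moreover have "(1::ereal) < ereal \<rho>" using rho1 by simp
    ultimately have "(1::ereal) < conv_radius d" using less_le_trans by blast
    thus ?thesis by (simp add: fps_conv_radius_def d_eq)
  qed
  assume c: "cmod c \<le> 1"
  have sj: "(\<lambda>k. cscale J (c^k) (homog J n (a j) k Y (h j))) sums freeval J n (a j) (sclt J c Y) (h j)"
    if j: "j < m" for j
  proof -
    have summ: "summable (\<lambda>k. cscale J (c^k) (homog J n (a j) k Y (h j)))"
    proof (rule summable_cmp_cs)
      show "eventually (\<lambda>k. norm (cscale J (c^k) (homog J n (a j) k Y (h j))) \<le> q^k * norm (h j)) sequentially"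
        using evh
      proof eventually_elim
        case (elim k)
        have "norm (cscale J (c^k) (homog J n (a j) k Y (h j))) = cmod c ^ k * norm (homog J n (a j) k Y (h j))"
          by (simp add: cs_norm[OF J] norm_power)
        also have "\<dots> \<le> 1 * norm (homog J n (a j) k Y (h j))"
          by (intro mult_right_mono) (use c in \<open>auto intro: power_le_one\<close>)
        also have "\<dots> \<le> q^k * norm (h j)" using elim j by simp
        finally show ?case by simp
      qed
      show "summable (\<lambda>k. q^k * norm (h j))"
        by (intro summable_mult2 summable_geometric) (use q0 q1 in auto)
    qed
    have "freeval J n (a j) (sclt J c Y) (h j) = (\<Sum>k. cscale J (c^k) (homog J n (a j) k Y (h j)))"
      unfolding freeval_def by (simp add: homog_sclt[OF J Y])
    thus ?thesis using summ by (simp add: summable_sums)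
  qed
  have "(\<Sum>j<m. freeval J n (a j) (sclt J c Y) (h j)) = (\<Sum>j<m. \<Sum>k. cscale J (c^k) (homog J n (a j) k Y (h j)))"
    using sj by (intro sum.cong refl) (simp add: sums_iff)
  also have "\<dots> = (\<Sum>k. \<Sum>j<m. cscale J (c^k) (homog J n (a j) k Y (h j)))"
    by (rule suminf_sum[symmetric]) (use sj in \<open>auto simp: sums_iff\<close>)
  also have "\<dots> = (\<Sum>k. cscale J (c^k) (C k))"
    by (simp add: C_def cs_sum[OF J])
  finally have eqs: "(\<Sum>j<m. freeval J n (a j) (sclt J c Y) (h j)) = (\<Sum>k. cscale J (c^k) (C k))" .
  have summC: "summable (\<lambda>k. cscale J (c^k) (C k))"
  proof -
    have "summable (\<lambda>k. \<Sum>j<m. cscale J (c^k) (homog J n (a j) k Y (h j)))"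
      by (rule summable_sum) (use sj in \<open>auto simp: sums_iff\<close>)
    thus ?thesis by (simp add: C_def cs_sum[OF J])
  qed
  have "cinner J (\<Sum>j<m. freeval J n (a j) (sclt J c Y) (h j)) e = (\<Sum>k. cinner J (cscale J (c^k) (C k)) e)"
    unfolding eqs by (rule bounded_linear.suminf[OF ci_bl[OF J] summC])
  also have "\<dots> = (\<Sum>k. d k * c^k)" by (simp add: ci_cs[OF J] d_def mult.commute)
  also have "\<dots> = eval_fps (Abs_fps (\<lambda>k. cinner J (C k) e)) c" by (simp add: eval_fps_def d_def)
  finally show "eval_fps (Abs_fps (\<lambda>k. cinner J (C k) e)) c = cinner J (\<Sum>j<m. freeval J n (a j) (sclt J c Y) (h j)) e"
    by simp
qed

end




context
  fixes J :: "'h::{real_inner,complete_space} \<Rightarrow> 'h"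
  assumes J: "cstruct J"
begin

lemma sclt_sclt: "sclt J c (sclt J d X) = sclt J (c * d) X"
  by (simp add: sclt_def[OF J] fun_eq_iff cs_mult[OF J])

lemma sclt_one: "sclt J 1 X = X"
  by (simp add: sclt_def[OF J] fun_eq_iff cs_one[OF J])

lemma rescale:
  assumes X: "\<forall>i<n. bop J (X i)" and s: "rownorm n X < s" "s < 1"
  shows "\<forall>i<n. bop J (sclt J (complex_of_real (1 / s)) X i)"
    and "rownorm n (sclt J (complex_of_real (1 / s)) X) < 1"
    and "sclt J (complex_of_real s) (sclt J (complex_of_real (1 / s)) X) = X"
proof -
  have bl: "\<forall>i<n. bounded_linear (X i)" using X by (simp add: bop_def)
  have s0: "s > 0" using rn_nonneg[OF bl] s by linarith
  show "\<forall>i<n. bop J (sclt J (complex_of_real (1 / s)) X i)" using X sclt_bop[OF J] by blast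
  have "rownorm n (sclt J (complex_of_real (1 / s)) X) \<le> cmod (complex_of_real (1 / s)) * rownorm n X"
    by (rule rownorm_sclt[OF J X])
  also have "\<dots> = rownorm n X / s" using s0 by (simp add: norm_divide)
  also have "\<dots> < 1" using s s0 by (simp add: field_simps)
  finally show "rownorm n (sclt J (complex_of_real (1 / s)) X) < 1" .
  show "sclt J (complex_of_real s) (sclt J (complex_of_real (1 / s)) X) = X"
    using s0 by (simp add: sclt_sclt sclt_one)
qed

lemma circle_pack:
  fixes a :: "nat \<Rightarrow> nat list \<Rightarrow> complex" and Y :: "nat \<Rightarrow> 'h \<Rightarrow> 'h" and h :: "nat \<Rightarrow> 'h"
  assumes holo: "\<forall>j<m. free_holo n (a j)"
    and maps: "\<forall>X\<in>ncball J n. (\<lambda>j. freeval J n (a j) X) \<in> ncball J m"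
    and Y: "\<forall>i<n. bop J (Y i)" and R1: "rownorm n Y < 1"
    and h: "(\<Sum>j<m. (norm (h j))\<^sup>2) \<le> 1"
  shows "fps_conv_radius (Abs_fps (\<lambda>k. cinner J (\<Sum>j<m. homog J n (a j) k Y (h j)) e)) > 1"
    and "\<forall>z. norm z = 1 \<longrightarrow> norm (eval_fps (Abs_fps (\<lambda>k. cinner J (\<Sum>j<m. homog J n (a j) k Y (h j)) e)) z) \<le> norm e"
    and "cmod c \<le> 1 \<Longrightarrow> eval_fps (Abs_fps (\<lambda>k. cinner J (\<Sum>j<m. homog J n (a j) k Y (h j)) e)) c
            = cinner J (\<Sum>j<m. freeval J n (a j) (sclt J c Y) (h j)) e"
proof -
  show "fps_conv_radius (Abs_fps (\<lambda>k. cinner J (\<Sum>j<m. homog J n (a j) k Y (h j)) e)) > 1"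
    using key_series(1)[OF J holo Y R1] by simp
  show "cmod c \<le> 1 \<Longrightarrow> eval_fps (Abs_fps (\<lambda>k. cinner J (\<Sum>j<m. homog J n (a j) k Y (h j)) e)) c
            = cinner J (\<Sum>j<m. freeval J n (a j) (sclt J c Y) (h j)) e"
    using key_series(2)[OF J holo Y R1] by simp
  show "\<forall>z. norm z = 1 \<longrightarrow> norm (eval_fps (Abs_fps (\<lambda>k. cinner J (\<Sum>j<m. homog J n (a j) k Y (h j)) e)) z) \<le> norm e"
  proof (intro allI impI)
    fix z :: complex assume z: "norm z = 1"
    have ev: "eval_fps (Abs_fps (\<lambda>k. cinner J (\<Sum>j<m. homog J n (a j) k Y (h j)) e)) z
            = cinner J (\<Sum>j<m. freeval J n (a j) (sclt J z Y) (h j)) e"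
      using key_series(2)[OF J holo Y R1, of z] z by simp
    have bl: "\<forall>i<n. bounded_linear (Y i)" using Y by (simp add: bop_def)
    have "rownorm n (sclt J z Y) \<le> cmod z * rownorm n Y" by (rule rownorm_sclt[OF J Y])
    hence "rownorm n (sclt J z Y) < 1" using z R1 by simp
    moreover have "\<forall>i<n. bop J (sclt J z Y i)" using Y sclt_bop[OF J] by blast
    ultimately have "sclt J z Y \<in> ncball J n" by (simp add: ncball_def)
    hence F: "(\<lambda>j. freeval J n (a j) (sclt J z Y)) \<in> ncball J m" using maps by blast
    hence Fb: "\<forall>j<m. bounded_linear (freeval J n (a j) (sclt J z Y))"
      and F1: "rownorm m (\<lambda>j. freeval J n (a j) (sclt J z Y)) < 1"
      by (auto simp: ncball_def bop_def)
    have F0: "rownorm m (\<lambda>j. freeval J n (a j) (sclt J z Y)) \<ge> 0" by (rule rn_nonneg[OF Fb])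
    have "norm (\<Sum>j<m. freeval J n (a j) (sclt J z Y) (h j))
          \<le> rownorm m (\<lambda>j. freeval J n (a j) (sclt J z Y)) * sqrt (\<Sum>j<m. (norm (h j))\<^sup>2)"
      using rn_scale[OF Fb, of h] by simp
    also have "\<dots> \<le> 1 * 1"
      by (intro mult_mono) (use F1 F0 h in \<open>auto simp: sum_nonneg\<close>)
    finally have V: "norm (\<Sum>j<m. freeval J n (a j) (sclt J z Y) (h j)) \<le> 1" by simp
    have "norm (cinner J (\<Sum>j<m. freeval J n (a j) (sclt J z Y) (h j)) e)
          \<le> norm (\<Sum>j<m. freeval J n (a j) (sclt J z Y) (h j)) * norm e" by (rule ci_norm[OF J])
    also have "\<dots> \<le> 1 * norm e" by (intro mult_right_mono V) simp
    finally show "norm (eval_fps (Abs_fps (\<lambda>k. cinner J (\<Sum>j<m. homog J n (a j) k Y (h j)) e)) z) \<le> norm e"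
      using ev by simp
  qed
qed

lemma homog_1: "homog J n b 1 Y x = (\<Sum>i<n. cscale J (b [i]) (Y i x))"
  unfolding homog_def sum_words_1 by simp

lemma homog_0: "homog J n b 0 Y x = cscale J (b []) x"
  unfolding homog_def by (simp add: words_0)

lemma sq_le_self: "(x::real) \<ge> 0 \<Longrightarrow> B \<ge> 0 \<Longrightarrow> x^2 \<le> x * B \<Longrightarrow> x \<le> B"
  by (cases "x = 0") (auto simp: power2_eq_square)

end




theorem mainTheorem16:
  fixes J :: "'h::{real_inner,complete_space} \<Rightarrow> 'h"
    and n m :: nat
    and a :: "nat \<Rightarrow> nat list \<Rightarrow> complex"
  assumes J: "cstruct J"
    and sep: "\<exists>D::'h set. countable D \<and> closure D = UNIV"
    and infdim: "\<not> (\<exists>S::'h set. finite S \<and> span S = UNIV)"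
    and n: "n \<ge> 1" and m: "m \<ge> 1"
    and holo: "\<forall>j<m. free_holo n (a j)"
    and maps: "\<forall>X\<in>ncball J n. (\<lambda>j. freeval J n (a j) X) \<in> ncball J m"
  shows "(\<forall>X\<in>ncball J n. linpart J n a X \<in> ncball J m)
         \<and> derivnorm m n a \<le> 1
         \<and> ((\<forall>j<m. a j [] = 0) \<longrightarrow>
              (\<forall>X\<in>ncball J n. rownorm m (\<lambda>j. freeval J n (a j) X) \<le> rownorm n X))"
proof -
  have partI: "\<forall>X\<in>ncball J n. linpart J n a X \<in> ncball J m"
  proof
    fix X assume Xin: "X \<in> ncball J n"
    hence Xb: "\<forall>i<n. bop J (X i)" and r1: "rownorm n X < 1" by (auto simp: ncball_def)
    have blX: "\<forall>i<n. bounded_linear (X i)" using Xb by (simp add: bop_def)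
    define r where "r = rownorm n X"
    have r0: "r \<ge> 0" using rn_nonneg[OF blX] by (simp add: r_def)
    define s where "s = (1 + r) / 2"
    have rs: "rownorm n X < s" "s < 1" "s > 0" using r1 r0 by (auto simp: s_def r_def)
    define Y where "Y = sclt J (complex_of_real (1 / s)) X"
    have Yb: "\<forall>i<n. bop J (Y i)" and rY: "rownorm n Y < 1" and XY: "sclt J (complex_of_real s) Y = X"
      using rescale[OF J Xb rs(1,2)] by (simp_all add: Y_def)
    have Xi: "X i x = s *\<^sub>R Y i x" for i x
    proof -
      have "X i x = sclt J (complex_of_real s) Y i x" using XY by simp
      thus ?thesis by (simp add: sclt_def[OF J] cs_real[OF J])
    qed
    have lin_eq: "linpart J n a X j x = s *\<^sub>R homog J n (a j) 1 Y x" for j x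
      unfolding linpart_def homog_1[OF J] by (simp add: Xi cs_scaleR[OF J] scaleR_sum_right)
    have bopL: "\<forall>j<m. bop J (linpart J n a X j)"
    proof (intro allI impI)
      fix j
      have "linpart J n a X j = (\<lambda>x. \<Sum>i<n. (cscale J (a j [i]) \<circ> X i) x)"
        by (simp add: linpart_def fun_eq_iff)
      moreover have "bop J (\<lambda>x. \<Sum>i<n. (cscale J (a j [i]) \<circ> X i) x)"
      proof (rule bop_sum[OF J])
        fix i assume "i \<in> {..<n}"
        hence "bop J (X i)" using Xb by simp
        thus "bop J (cscale J (a j [i]) \<circ> X i)" by (rule bop_comp[OF J bop_cscale[OF J]])
      qed
      ultimately show "bop J (linpart J n a X j)" by simp
    qed
    have "rownorm m (linpart J n a X) \<le> s"
    proof (rule rn_le)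
      fix h :: "nat \<Rightarrow> 'h" assume h: "(\<Sum>j<m. (norm (h j))\<^sup>2) \<le> 1"
      define C1 where "C1 = (\<Sum>j<m. homog J n (a j) 1 Y (h j))"
      define f where "f = Abs_fps (\<lambda>k. cinner J (\<Sum>j<m. homog J n (a j) k Y (h j)) C1)"
      have rad: "fps_conv_radius f > 1" and bd: "\<forall>z. norm z = 1 \<longrightarrow> norm (eval_fps f z) \<le> norm C1"
        using circle_pack(1,2)[OF J holo maps Yb rY h, of C1] by (simp_all add: f_def)
      have "norm (fps_nth f 1) \<le> norm C1" by (rule coeff_bound[OF rad bd])
      moreover have "fps_nth f 1 = complex_of_real ((norm C1)\<^sup>2)"
        by (simp add: f_def C1_def ci_self[OF J])
      ultimately have "(norm C1)\<^sup>2 \<le> norm C1 * 1" by (simp add: norm_power)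
      hence C1le: "norm C1 \<le> 1" using sq_le_self[OF J, of "norm C1" 1] by simp
      have "(\<Sum>j<m. linpart J n a X j (h j)) = s *\<^sub>R C1"
        by (simp add: lin_eq C1_def scaleR_sum_right)
      hence "norm (\<Sum>j<m. linpart J n a X j (h j)) = s * norm C1" using rs by simp
      also have "\<dots> \<le> s * 1" using C1le rs by (intro mult_left_mono) auto
      finally show "norm (\<Sum>j<m. linpart J n a X j (h j)) \<le> s" by simp
    qed
    hence "rownorm m (linpart J n a X) < 1" using rs by simp
    thus "linpart J n a X \<in> ncball J m" using bopL by (simp add: ncball_def)
  qed
  obtain u :: 'h where u: "norm u = 1"
  proof -
    have "span ({}::'h set) \<noteq> UNIV" using infdim by blast
    then obtain v :: 'h where "v \<notin> span {}" by blast
    hence "v \<noteq> 0" by simp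
    thus ?thesis using that[of "(1 / norm v) *\<^sub>R v"] by simp
  qed
  have deriv: "derivnorm m n a \<le> 1"
    unfolding derivnorm_def
  proof (rule cSup_least)
    show "{sqrt (\<Sum>j<m. (cmod (\<Sum>i<n. a j [i] * z i))\<^sup>2) |z. (\<Sum>i<n. (cmod (z i))\<^sup>2) \<le> 1} \<noteq> {}"
      by (auto intro!: exI[of _ "\<lambda>_::nat. 0::complex"])
  next
    fix y assume "y \<in> {sqrt (\<Sum>j<m. (cmod (\<Sum>i<n. a j [i] * z i))\<^sup>2) |z. (\<Sum>i<n. (cmod (z i))\<^sup>2) \<le> 1}"
    then obtain z where z: "(\<Sum>i<n. (cmod (z i))\<^sup>2) \<le> 1"
      and y: "y = sqrt (\<Sum>j<m. (cmod (\<Sum>i<n. a j [i] * z i))\<^sup>2)" by blast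
    define w where "w j = (\<Sum>i<n. a j [i] * z i)" for j
    define W where "W = (\<Sum>j<m. (cmod (w j))\<^sup>2)"
    have W0: "W \<ge> 0" by (simp add: W_def sum_nonneg)
    have key: "t * sqrt W < 1" if t: "0 < t" "t < 1" for t
    proof (cases "W = 0")
      case True thus ?thesis using t by simp
    next
      case False
      hence Wp: "W > 0" using W0 by simp
      define X where "X i = cscale J (complex_of_real t * z i)" for i
      have Xb: "\<forall>i<n. bop J (X i)" by (simp add: X_def bop_cscale[OF J])
      have rX: "rownorm n X \<le> t"
      proof (rule rn_le)
        fix h :: "nat \<Rightarrow> 'h" assume h: "(\<Sum>i<n. (norm (h i))\<^sup>2) \<le> 1"
        have "norm (\<Sum>i<n. X i (h i)) \<le> (\<Sum>i<n. norm (X i (h i)))" by (rule norm_sum)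
        also have "\<dots> = (\<Sum>i<n. t * (\<bar>cmod (z i)\<bar> * \<bar>norm (h i)\<bar>))"
          using t by (simp add: X_def cs_norm[OF J] norm_mult mult.assoc)
        also have "\<dots> = t * (\<Sum>i<n. \<bar>cmod (z i)\<bar> * \<bar>norm (h i)\<bar>)" by (simp add: sum_distrib_left)
        also have "\<dots> \<le> t * (L2_set (\<lambda>i. cmod (z i)) {..<n} * L2_set (\<lambda>i. norm (h i)) {..<n})"
          using t by (intro mult_left_mono L2_set_mult_ineq) auto
        also have "\<dots> \<le> t * (1 * 1)"
          using t z h by (intro mult_left_mono mult_mono) (auto simp: L2_set_def L2_set_nonneg sum_nonneg)
        finally show "norm (\<Sum>i<n. X i (h i)) \<le> t" by simp
      qed
      have "X \<in> ncball J n" using Xb rX t by (simp add: ncball_def)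
      hence L: "linpart J n a X \<in> ncball J m" using partI by blast
      hence Lbl: "\<forall>j<m. bounded_linear (linpart J n a X j)" and L1: "rownorm m (linpart J n a X) < 1"
        by (auto simp: ncball_def bop_def)
      have Leq: "linpart J n a X j x = cscale J (complex_of_real t * w j) x" for j x
      proof -
        have "linpart J n a X j x = (\<Sum>i<n. cscale J (a j [i] * (complex_of_real t * z i)) x)"
          by (simp add: linpart_def X_def cs_mult[OF J])
        also have "\<dots> = cscale J (\<Sum>i<n. a j [i] * (complex_of_real t * z i)) x"
          by (simp add: cs_sumc[OF J])
        also have "(\<Sum>i<n. a j [i] * (complex_of_real t * z i)) = complex_of_real t * w j"
          by (simp add: w_def sum_distrib_left mult_ac)
        finally show ?thesis .
      qed
      define h where "h j = (1 / sqrt W) *\<^sub>R cscale J (cnj (w j)) u" for j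
      have hn: "(\<Sum>j<m. (norm (h j))\<^sup>2) = 1"
      proof -
        have "(\<Sum>j<m. (norm (h j))\<^sup>2) = (\<Sum>j<m. (cmod (w j))\<^sup>2) / W"
          using Wp u by (simp add: h_def cs_norm[OF J] power_mult_distrib power_divide sum_divide_distrib)
        thus ?thesis using Wp by (simp add: W_def)
      qed
      have cj: "linpart J n a X j (h j) = (1 / sqrt W) *\<^sub>R cscale J (complex_of_real (t * (cmod (w j))\<^sup>2)) u" for j
      proof -
        have "linpart J n a X j (h j) = (1 / sqrt W) *\<^sub>R cscale J (complex_of_real t * w j * cnj (w j)) u"
          by (simp add: Leq h_def cs_scaleR[OF J] cs_mult[OF J] mult.assoc)
        also have "complex_of_real t * w j * cnj (w j) = complex_of_real (t * (cmod (w j))\<^sup>2)"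
          using complex_norm_square[of "w j"] by (simp add: mult.assoc)
        finally show ?thesis .
      qed
      have "(\<Sum>j<m. linpart J n a X j (h j)) = (\<Sum>j<m. (1 / sqrt W) *\<^sub>R ((t * (cmod (w j))\<^sup>2) *\<^sub>R u))"
        by (simp only: cj cs_real[OF J])
      also have "\<dots> = (1 / sqrt W) *\<^sub>R ((t * W) *\<^sub>R u)"
        by (simp only: W_def sum_distrib_left scaleR_sum_left scaleR_sum_right scaleR_scaleR)
      finally have "(\<Sum>j<m. linpart J n a X j (h j)) = (1 / sqrt W) *\<^sub>R ((t * W) *\<^sub>R u)" .
      moreover have "norm ((1 / sqrt W) *\<^sub>R ((t * W) *\<^sub>R u)) = t * (W / sqrt W)"
        using u Wp t by simp
      moreover have "W / sqrt W = sqrt W" using Wp by (simp add: real_div_sqrt)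
      ultimately have "norm (\<Sum>j<m. linpart J n a X j (h j)) = t * sqrt W" by simp
      moreover have "norm (\<Sum>j<m. linpart J n a X j (h j)) \<le> rownorm m (linpart J n a X)"
        by (rule rn_ge[OF Lbl]) (simp add: hn)
      ultimately show ?thesis using L1 by simp
    qed
    show "y \<le> 1"
    proof (rule ccontr)
      assume "\<not> y \<le> 1"
      hence y1: "sqrt W > 1" using y by (simp add: W_def w_def)
      have "(1 / sqrt W) * sqrt W < 1" by (rule key) (use y1 in auto)
      thus False using y1 by simp
    qed
  qed
  have partII: "(\<forall>j<m. a j [] = 0) \<longrightarrow>
              (\<forall>X\<in>ncball J n. rownorm m (\<lambda>j. freeval J n (a j) X) \<le> rownorm n X)"
  proof (intro impI ballI)
    assume a0: "\<forall>j<m. a j [] = 0"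
    fix X assume Xin: "X \<in> ncball J n"
    hence Xb: "\<forall>i<n. bop J (X i)" and r1: "rownorm n X < 1" by (auto simp: ncball_def)
    have blX: "\<forall>i<n. bounded_linear (X i)" using Xb by (simp add: bop_def)
    define r where "r = rownorm n X"
    have r0: "r \<ge> 0" using rn_nonneg[OF blX] by (simp add: r_def)
    show "rownorm m (\<lambda>j. freeval J n (a j) X) \<le> rownorm n X"
    proof (rule rn_le)
      fix h :: "nat \<Rightarrow> 'h" assume h: "(\<Sum>j<m. (norm (h j))\<^sup>2) \<le> 1"
      define v where "v = (\<Sum>j<m. freeval J n (a j) X (h j))"
      have vs: "norm v \<le> s" if s: "rownorm n X < s" "s < 1" for s
      proof -
        have s0: "s > 0" using s r0 by (simp add: r_def)
        define Y where "Y = sclt J (complex_of_real (1 / s)) X"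
        have Yb: "\<forall>i<n. bop J (Y i)" and rY: "rownorm n Y < 1" and XY: "sclt J (complex_of_real s) Y = X"
          using rescale[OF J Xb s] by (simp_all add: Y_def)
        define f where "f = Abs_fps (\<lambda>k. cinner J (\<Sum>j<m. homog J n (a j) k Y (h j)) v)"
        have rad: "fps_conv_radius f > 1" and bd: "\<forall>z. norm z = 1 \<longrightarrow> norm (eval_fps f z) \<le> norm v"
          using circle_pack(1,2)[OF J holo maps Yb rY h, of v] by (simp_all add: f_def)
        have "eval_fps f (complex_of_real s) = cinner J (\<Sum>j<m. freeval J n (a j) (sclt J (complex_of_real s) Y) (h j)) v"
          using circle_pack(3)[OF J holo maps Yb rY h, of "complex_of_real s" v] s s0 by (simp add: f_def)
        also have "\<dots> = complex_of_real ((norm v)\<^sup>2)" by (simp add: XY v_def[symmetric] ci_self[OF J])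
        finally have ev: "eval_fps f (complex_of_real s) = complex_of_real ((norm v)\<^sup>2)" .
        have C0: "(\<Sum>j<m. homog J n (a j) 0 Y (h j)) = 0"
          unfolding homog_0[OF J] by (rule sum.neutral) (simp add: a0 cs_zero[OF J])
        have f0: "fps_nth f 0 = 0"
          by (simp add: f_def C0 cinner_def complex_eq_iff)
        have "norm (eval_fps f (complex_of_real s)) \<le> norm v * s"
          by (rule schwarz_fps[OF rad bd f0]) (use s0 s in auto)
        hence "(norm v)\<^sup>2 \<le> norm v * s" using ev by (simp add: norm_power)
        thus ?thesis using sq_le_self[OF J, of "norm v" s] s0 by simp
      qed
      show "norm (\<Sum>j<m. freeval J n (a j) X (h j)) \<le> rownorm n X"
      proof (rule ccontr)
        assume "\<not> norm (\<Sum>j<m. freeval J n (a j) X (h j)) \<le> rownorm n X"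
        hence gt: "norm v > r" by (simp add: v_def r_def)
        define s where "s = (r + min (norm v) 1) / 2"
        have "rownorm n X < s" "s < 1" using gt r1 by (auto simp: s_def r_def)
        hence "norm v \<le> s" by (rule vs)
        moreover have "s < norm v" using gt r1 by (auto simp: s_def r_def)
        ultimately show False by simp
      qed
    qed
  qed
  show ?thesis using partI deriv partII by blast
qed


end
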